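(* Let $\mathbb{R}^n$ be endowed with the $\ell_1$ norm and $\mathbb{R}^m$ with an arbitrary norm $\|\cdot\|$. Suppose $A\in\mathbb{R}^{m\times n}$ has at least two different columns and $f:\mathbb{R}^m\to\mathbb{R}\cup\{\infty\}$ is a differentiable convex function that is $L_f$-smooth and $\mu_f$-strongly convex on $\mathrm{conv}(A)$. Then \[ L_{f,A}\le \frac{L_f\cdot \mathrm{diam}(A)^2}{4},\qquad \mu_{f,A}\ge\frac{\mu_f\cdot\Phi(A)^2}{4}, \] and in particular $\dfrac{L_{f,A}}{\mu_{f,A}}\le\dfrac{L_f}{\mu_f}\cdot\dfrac{\mathrm{diam}(A)^2}{\Phi(A)^2}$.
   Context: A differentiable convex $f$ is $L_f$-smooth (with $L_f>0$) on $S\subseteq\mathrm{dom}(f)$ if $f(v)\le f(u)+\langle\nabla f(u),v-u\rangle+\frac{L_f}{2}\|v-u\|^2$ for all $u,v\in S$, and $\mu_f$-strongly convex (with $\mu_f\ge0$) on $S$ if $f(v)\ge f(u)+\langle\nabla f(u),v-u\rangle+\frac{\mu_f}{2}\|v-u\|^2$ for all $u,v\in S$. $\Delta_{n-1}=\{x\in\mathbb{R}^n_+:\sum_ix_i=1\}$; $A$ is identified with the set of its columns; $\mathrm{conv}(A)=\{Ax:x\in\Delta_{n-1}\}$; for $u\in\mathrm{conv}(A)$, $Z(u)=\{z\in\Delta_{n-1}:Az=u\}$ and $\mathrm{dist}(x,Z(u))=\min_{z\in Z(u)}\|x-z\|_1$. The relative constants are \[ L_{f,A}=\sup_{u\in\mathrm{conv}(A),\,x\in\Delta_{n-1}\setminus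 Z(u)}\frac{2(f(Ax)-f(u)-\langle\nabla f(u),Ax-u\rangle)}{\mathrm{dist}(x,Z(u))^2}, \] and $\mu_{f,A}$ the same expression with $\inf$ instead of $\sup$. $\mathrm{diam}(A)=\sup_{u,w\in A}\|u-w\|$, and the facial distance is $\Phi(A)=\min\{\mathrm{dist}(F,\mathrm{conv}(A\setminus F)):F\text{ a face of }\mathrm{conv}(A),\ \emptyset\ne F\ne\mathrm{conv}(A)\}$, with $A\setminus F$ the columns of $A$ not in $F$ and $\mathrm{dist}(F,G)=\inf_{u\in F,w\in G}\|u-w\|$. *)

theory Defs
  imports "HOL-Analysis.Analysis"
begin

definition is_norm :: "('a::real_vector \<Rightarrow> real) \<Rightarrow> bool" where
  "is_norm N \<longleftrightarrow> (\<forall>x. N x = 0 \<longleftrightarrow> x = 0) \<and> (\<forall>x y. N (x + y) \<le> N x + N y)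
      \<and> (\<forall>c x. N (c *\<^sub>R x) = \<bar>c\<bar> * N x)"

definition l1norm :: "real^'n \<Rightarrow> real" where
  "l1norm x = (\<Sum>i\<in>UNIV. \<bar>x $ i\<bar>)"

definition std_simplex :: "(real^'n) set" where
  "std_simplex = {x. (\<forall>i. 0 \<le> x $ i) \<and> (\<Sum>i\<in>UNIV. x $ i) = 1}"

definition convA :: "real^'n^'m \<Rightarrow> (real^'m) set" where
  "convA A = {A *v x | x. x \<in> std_simplex}"

definition Zset :: "real^'n^'m \<Rightarrow> real^'m \<Rightarrow> (real^'n) set" where
  "Zset A u = {z \<in> std_simplex. A *v z = u}"

text \<open>dist(x, Z(u)) in the l1 norm (the minimum exists; written as an infimum).\<close>
definition distZ :: "real^'n^'m \<Rightarrow> real^'n \<Rightarrow> real^'m \<Rightarrow> real" where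
  "distZ A x u = Inf {l1norm (x - z) | z. z \<in> Zset A u}"

text \<open>Bregman-type gap f(v) - f(u) - <grad f(u), v - u>, with f' u the derivative at u.\<close>
definition breg :: "(real^'m \<Rightarrow> real) \<Rightarrow> (real^'m \<Rightarrow> real^'m \<Rightarrow> real) \<Rightarrow> real^'m \<Rightarrow> real^'m \<Rightarrow> real" where
  "breg f f' u v = f v - f u - f' u (v - u)"

definition rel_quot :: "(real^'m \<Rightarrow> real) \<Rightarrow> (real^'m \<Rightarrow> real^'m \<Rightarrow> real) \<Rightarrow> real^'n^'m
     \<Rightarrow> (real^'m) \<times> (real^'n) \<Rightarrow> ereal" where
  "rel_quot f f' A p = ereal (2 * breg f f' (fst p) (A *v snd p) / (distZ A (snd p) (fst p))\<^sup>2)"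

definition rel_pairs :: "real^'n^'m \<Rightarrow> ((real^'m) \<times> (real^'n)) set" where
  "rel_pairs A = {(u, x). u \<in> convA A \<and> x \<in> std_simplex - Zset A u}"

definition L_rel :: "(real^'m \<Rightarrow> real) \<Rightarrow> (real^'m \<Rightarrow> real^'m \<Rightarrow> real) \<Rightarrow> real^'n^'m \<Rightarrow> ereal" where
  "L_rel f f' A = (SUP p \<in> rel_pairs A. rel_quot f f' A p)"

definition mu_rel :: "(real^'m \<Rightarrow> real) \<Rightarrow> (real^'m \<Rightarrow> real^'m \<Rightarrow> real) \<Rightarrow> real^'n^'m \<Rightarrow> ereal" where
  "mu_rel f f' A = (INF p \<in> rel_pairs A. rel_quot f f' A p)"

definition smooth_on :: "(real^'m \<Rightarrow> real) \<Rightarrow> real \<Rightarrow> (real^'m \<Rightarrow> real) \<Rightarrow> (real^'m \<Rightarrow> real^'m \<Rightarrow> real)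
     \<Rightarrow> (real^'m) set \<Rightarrow> bool" where
  "smooth_on N L f f' S \<longleftrightarrow> L > 0 \<and>
     (\<forall>u\<in>S. \<forall>v\<in>S. f v \<le> f u + f' u (v - u) + L / 2 * (N (v - u))\<^sup>2)"

definition strongly_convex_wrt :: "(real^'m \<Rightarrow> real) \<Rightarrow> real \<Rightarrow> (real^'m \<Rightarrow> real) \<Rightarrow> (real^'m \<Rightarrow> real^'m \<Rightarrow> real)
     \<Rightarrow> (real^'m) set \<Rightarrow> bool" where
  "strongly_convex_wrt N \<mu> f f' S \<longleftrightarrow> \<mu> \<ge> 0 \<and>
     (\<forall>u\<in>S. \<forall>v\<in>S. f v \<ge> f u + f' u (v - u) + \<mu> / 2 * (N (v - u))\<^sup>2)"

definition diamA :: "(real^'m \<Rightarrow> real) \<Rightarrow> real^'n^'m \<Rightarrow> real" where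
  "diamA N A = Sup {N (column i A - column j A) | i j. True}"

definition setdistN :: "(real^'m \<Rightarrow> real) \<Rightarrow> (real^'m) set \<Rightarrow> (real^'m) set \<Rightarrow> real" where
  "setdistN N F G = Inf {N (u - w) | u w. u \<in> F \<and> w \<in> G}"

definition facial_dist :: "(real^'m \<Rightarrow> real) \<Rightarrow> real^'n^'m \<Rightarrow> real" where
  "facial_dist N A = Inf {setdistN N F (convex hull {column j A | j. column j A \<notin> F}) | F.
       F face_of convA A \<and> F \<noteq> {} \<and> F \<noteq> convA A}"

end

theory Submission
  imports Defs
begin


lemma mv_sum: "(A::real^'n^'m) *v x = (\<Sum>k\<in>UNIV. (x$k) *\<^sub>R column k A)"
  by (simp add: matrix_mult_sum scalar_mult_eq_scaleR)

lemma norm_zero: "is_norm N \<Longrightarrow> N 0 = 0"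
  unfolding is_norm_def by auto

lemma norm_scale: "is_norm N \<Longrightarrow> N (c *\<^sub>R x) = \<bar>c\<bar> * N x"
  unfolding is_norm_def by auto

lemma norm_tri: "is_norm N \<Longrightarrow> N (x + y) \<le> N x + N y"
  unfolding is_norm_def by auto

lemma norm_neg: "is_norm N \<Longrightarrow> N (- x) = N x"
  using norm_scale[of N "-1" x] by simp

lemma norm_nonneg': "is_norm N \<Longrightarrow> N x \<ge> 0"
proof -
  assume n: "is_norm N"
  have "N 0 \<le> N x + N (-x)" using norm_tri[OF n, of x "-x"] by simp
  then show ?thesis using norm_zero[OF n] norm_neg[OF n] by simp
qed

lemma norm_commute: "is_norm N \<Longrightarrow> N (x - y) = N (y - x)"
  using norm_neg[of N "x - y"] by simp

lemma norm_pos: "is_norm N \<Longrightarrow> x \<noteq> 0 \<Longrightarrow> N x > 0"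
  using norm_nonneg'[of N x] unfolding is_norm_def by force

lemma norm_sum: assumes n: "is_norm N" and fin: "finite S"
  shows "N (\<Sum>i\<in>S. f i) \<le> (\<Sum>i\<in>S. N (f i))"
  using fin
proof (induction S rule: finite_induct)
  case empty then show ?case by (simp add: norm_zero[OF n])
next
  case (insert a S)
  then show ?case using norm_tri[OF n, of "f a" "sum f S"] by simp
qed

lemma norm_bound:
  fixes N :: "'a::euclidean_space \<Rightarrow> real"
  assumes n: "is_norm N"
  shows "\<exists>K\<ge>0. \<forall>x. N x \<le> K * norm x"
proof -
  define K where "K = (\<Sum>b\<in>Basis. N b)"
  have K0: "K \<ge> 0" unfolding K_def by (simp add: sum_nonneg norm_nonneg'[OF n])
  have "N x \<le> K * norm x" for x
  proof -
    have "N x = N (\<Sum>b\<in>Basis. (x \<bullet> b) *\<^sub>R b)" by (simp add: euclidean_representation)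
    also have "\<dots> \<le> (\<Sum>b\<in>Basis. N ((x \<bullet> b) *\<^sub>R b))" by (rule norm_sum[OF n]) simp
    also have "\<dots> = (\<Sum>b\<in>Basis. \<bar>x \<bullet> b\<bar> * N b)" by (simp add: norm_scale[OF n])
    also have "\<dots> \<le> (\<Sum>b\<in>Basis. norm x * N b)"
      by (intro sum_mono mult_right_mono Basis_le_norm norm_nonneg'[OF n]) auto
    also have "\<dots> = K * norm x" by (simp add: K_def sum_distrib_left mult.commute)
    finally show ?thesis .
  qed
  then show ?thesis using K0 by blast
qed

lemma norm_cont:
  fixes N :: "'a::euclidean_space \<Rightarrow> real"
  assumes n: "is_norm N"
  shows "continuous_on S N"
proof -
  obtain K where K: "K \<ge> 0" "\<And>x. N x \<le> K * norm x" using norm_bound[OF n] by blast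
  have lip: "\<bar>N x - N y\<bar> \<le> K * dist x y" for x y
  proof -
    have "N x \<le> N y + N (x - y)" using norm_tri[OF n, of y "x - y"] by simp
    moreover have "N y \<le> N x + N (y - x)" using norm_tri[OF n, of x "y - x"] by simp
    moreover have "N (x - y) \<le> K * dist x y" using K(2)[of "x - y"] by (simp add: dist_norm)
    moreover have "N (y - x) = N (x - y)" using norm_commute[OF n] by simp
    ultimately show ?thesis by linarith
  qed
  show ?thesis unfolding continuous_on_iff
  proof (intro ballI allI impI)
    fix x e assume "x \<in> S" "(e::real) > 0"
    show "\<exists>d>0. \<forall>x'\<in>S. dist x' x < d \<longrightarrow> dist (N x') (N x) < e"
    proof (intro exI[of _ "e / (K + 1)"] conjI ballI impI)
      show "e / (K + 1) > 0" using \<open>e > 0\<close> K by simp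
      fix y assume "y \<in> S" "dist y x < e / (K + 1)"
      then have "(K+1) * dist y x < e" using K by (simp add: field_simps)
      moreover have "K * dist y x \<le> (K + 1) * dist y x" by (simp add: distrib_right)
      ultimately show "dist (N y) (N x) < e" using lip[of y x] by (simp add: dist_real_def)
    qed
  qed
qed



lemma simplex_le1: "x \<in> std_simplex \<Longrightarrow> x $ i \<le> 1"
proof -
  assume x: "x \<in> std_simplex"
  have "x $ i \<le> (\<Sum>j\<in>UNIV. x $ j)"
    using x by (intro member_le_sum) (auto simp: std_simplex_def)
  then show ?thesis using x by (simp add: std_simplex_def)
qed

lemma closed_simplex: "closed (std_simplex :: (real^'n) set)"
proof -
  have "std_simplex = {x::real^'n. (\<forall>i. 0 \<le> x $ i) \<and> (\<Sum>i\<in>UNIV. x $ i) = 1}"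
    by (simp add: std_simplex_def)
  also have "closed \<dots>"
    by (intro closed_Collect_conj closed_Collect_all closed_Collect_le closed_Collect_eq continuous_intros)
  finally show ?thesis .
qed

lemma bounded_simplex: "bounded (std_simplex :: (real^'n) set)"
  unfolding bounded_iff
proof (intro exI ballI)
  fix x :: "real^'n" assume "x \<in> std_simplex"
  then have "(\<Sum>i\<in>UNIV. \<bar>x $ i\<bar>) = 1" by (simp add: std_simplex_def)
  then show "norm x \<le> 1" using norm_le_l1_cart[of x] by simp
qed

lemma compact_simplex: "compact (std_simplex :: (real^'n) set)"
  by (simp add: compact_eq_bounded_closed closed_simplex bounded_simplex)

lemma axis_simplex: "axis i 1 \<in> (std_simplex :: (real^'n) set)"
  by (simp add: std_simplex_def axis_def)

lemma convex_simplex: "convex (std_simplex :: (real^'n) set)"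
  unfolding convex_def std_simplex_def
  by (auto simp: sum.distrib sum_distrib_left[symmetric])

lemma convA_image: "convA A = (\<lambda>x. A *v x) ` std_simplex"
  unfolding convA_def by auto

lemma convex_convA: "convex (convA A)"
  unfolding convA_image by (intro convex_linear_image matrix_vector_mul_linear convex_simplex)

lemma column_convA: "column i A \<in> convA A"
  unfolding convA_def using axis_simplex[of i] matrix_vector_mult_basis[of A i] by force

lemma convA_hull: "convA A = convex hull (range (\<lambda>i. column i A))"
proof (rule hull_unique[symmetric])
  show "range (\<lambda>i. column i A) \<subseteq> convA A" using column_convA by blast
  show "convex (convA A)" by (rule convex_convA)
  fix T assume T: "range (\<lambda>i. column i A) \<subseteq> T" "convex T"
  show "convA A \<subseteq> T"
  proof
    fix y assume "y \<in> convA A"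
    then obtain x where x: "x \<in> std_simplex" "y = A *v x" unfolding convA_def by auto
    have "(\<Sum>k\<in>UNIV. (x$k) *\<^sub>R column k A) \<in> T"
      using x(1) T by (intro convex_sum) (auto simp: std_simplex_def)
    then show "y \<in> T" using x(2) mv_sum by metis
  qed
qed

lemma polytope_convA: "polytope (convA A)"
  unfolding polytope_def convA_hull by (intro exI[of _ "range (\<lambda>i. column i A)"]) simp

lemma compact_convA: "compact (convA A)"
  by (simp add: convA_hull compact_convex_hull finite_imp_compact)

lemma mv_convA: "x \<in> std_simplex \<Longrightarrow> A *v x \<in> convA A"
  unfolding convA_def by auto

lemma diam_upper: "N (column i A - column j A) \<le> diamA N A"
proof -
  have "{N (column i A - column j A) | i j. True} = (\<lambda>(i,j). N (column i A - column j A)) ` UNIV"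
    by auto
  then have "finite {N (column i A - column j A) | i j. True}" by simp
  then show ?thesis unfolding diamA_def by (intro cSup_upper) (auto intro: bdd_above_finite)
qed

lemma diam_nonneg: "is_norm N \<Longrightarrow> diamA N A \<ge> 0"
  using diam_upper[where N=N and i=i and j=i and A=A] norm_zero[of N] by simp

definition pp :: "real^'n \<Rightarrow> real^'n" where "pp w = (\<chi> k. max (w $ k) 0)"
definition nn :: "real^'n \<Rightarrow> real^'n" where "nn w = (\<chi> k. max (- (w $ k)) 0)"

lemma pp_nn: "w = pp w - nn w" by (simp add: pp_def nn_def vec_eq_iff max_def)

lemma l1_pp_nn: "l1norm w = (\<Sum>k\<in>UNIV. pp w $ k) + (\<Sum>k\<in>UNIV. nn w $ k)"
  unfolding l1norm_def pp_def nn_def by (simp add: sum.distrib[symmetric]) (intro sum.cong; auto)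

lemma sum_pp_nn: "(\<Sum>k\<in>UNIV. w $ k) = 0 \<Longrightarrow> (\<Sum>k\<in>UNIV. pp w $ k) = (\<Sum>k\<in>UNIV. nn w $ k)"
proof -
  assume "(\<Sum>k\<in>UNIV. w $ k) = 0"
  moreover have "(\<Sum>k\<in>UNIV. w $ k) = (\<Sum>k\<in>UNIV. pp w $ k) - (\<Sum>k\<in>UNIV. nn w $ k)"
    by (subst pp_nn) (simp add: sum_subtractf)
  ultimately show ?thesis by simp
qed

lemma simplex_diff_sum: "x \<in> std_simplex \<Longrightarrow> z \<in> std_simplex \<Longrightarrow> (\<Sum>k\<in>UNIV. (x - z) $ k) = 0"
  by (simp add: std_simplex_def sum_subtractf)

lemma upper_main:
  assumes n: "is_norm N" and x: "x \<in> std_simplex" and z: "z \<in> std_simplex"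
  shows "N (A *v x - A *v z) \<le> l1norm (x - z) / 2 * diamA N A"
proof -
  define w where "w = x - z"
  define t where "t = (\<Sum>k\<in>UNIV. pp w $ k)"
  have tn: "t = (\<Sum>k\<in>UNIV. nn w $ k)" unfolding t_def w_def
    by (rule sum_pp_nn[OF simplex_diff_sum[OF x z]])
  have l1: "l1norm w = 2 * t" using l1_pp_nn[of w] tn t_def by simp
  have ppnn0: "pp w $ k \<ge> 0" "nn w $ k \<ge> 0" for k by (auto simp: pp_def nn_def)
  have t0: "t \<ge> 0" unfolding t_def by (simp add: sum_nonneg ppnn0)
  have eq: "A *v x - A *v z = (\<Sum>k\<in>UNIV. (pp w $ k) *\<^sub>R column k A) - (\<Sum>k\<in>UNIV. (nn w $ k) *\<^sub>R column k A)"
  proof -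
    have "A *v x - A *v z = A *v (pp w) - A *v (nn w)"
      using pp_nn[of w] by (metis matrix_vector_mult_diff_distrib w_def)
    then show ?thesis by (simp add: mv_sum)
  qed
  show ?thesis
  proof (cases "t = 0")
    case True
    then have "pp w $ k = 0" "nn w $ k = 0" for k
      using sum_nonneg_eq_0_iff[of UNIV "\<lambda>k. pp w $ k"] sum_nonneg_eq_0_iff[of UNIV "\<lambda>k. nn w $ k"]
        ppnn0 t_def tn by auto
    then have "A *v x - A *v z = 0" using eq by simp
    then show ?thesis using norm_zero[OF n] diam_nonneg[OF n, of A] l1 True w_def by simp
  next
    case False
    then have tpos: "t > 0" using t0 by simp
    define c where "c i j = pp w $ i * nn w $ j / t" for i j
    have "(\<Sum>i\<in>UNIV. \<Sum>j\<in>UNIV. c i j *\<^sub>R (column i A - column j A))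
        = (\<Sum>i\<in>UNIV. \<Sum>j\<in>UNIV. c i j *\<^sub>R column i A) - (\<Sum>i\<in>UNIV. \<Sum>j\<in>UNIV. c i j *\<^sub>R column j A)"
      by (simp add: scaleR_diff_right sum_subtractf)
    also have "(\<Sum>i\<in>UNIV. \<Sum>j\<in>UNIV. c i j *\<^sub>R column i A) = (\<Sum>i\<in>UNIV. (pp w $ i) *\<^sub>R column i A)"
    proof (intro sum.cong refl)
      fix i
      have "(\<Sum>j\<in>UNIV. c i j *\<^sub>R column i A) = (\<Sum>j\<in>UNIV. c i j) *\<^sub>R column i A"
        by (simp add: scaleR_sum_left)
      also have "(\<Sum>j\<in>UNIV. c i j) = pp w $ i"
        using tpos by (simp add: c_def sum_divide_distrib[symmetric] sum_distrib_left[symmetric] tn[symmetric])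
      finally show "(\<Sum>j\<in>UNIV. c i j *\<^sub>R column i A) = (pp w $ i) *\<^sub>R column i A" .
    qed
    also have "(\<Sum>i\<in>UNIV. \<Sum>j\<in>UNIV. c i j *\<^sub>R column j A) = (\<Sum>j\<in>UNIV. (nn w $ j) *\<^sub>R column j A)"
    proof (subst sum.swap, intro sum.cong refl)
      fix j
      have "(\<Sum>i\<in>UNIV. c i j *\<^sub>R column j A) = (\<Sum>i\<in>UNIV. c i j) *\<^sub>R column j A"
        by (simp add: scaleR_sum_left)
      also have "(\<Sum>i\<in>UNIV. c i j) = nn w $ j"
        using tpos by (simp add: c_def sum_divide_distrib[symmetric] sum_distrib_right[symmetric] t_def[symmetric])
      finally show "(\<Sum>i\<in>UNIV. c i j *\<^sub>R column j A) = (nn w $ j) *\<^sub>R column j A" .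
    qed
    finally have eq2: "A *v x - A *v z = (\<Sum>i\<in>UNIV. \<Sum>j\<in>UNIV. c i j *\<^sub>R (column i A - column j A))"
      using eq by simp
    have c0: "c i j \<ge> 0" for i j using tpos ppnn0 by (simp add: c_def)
    have "N (A *v x - A *v z) \<le> (\<Sum>i\<in>UNIV. N (\<Sum>j\<in>UNIV. c i j *\<^sub>R (column i A - column j A)))"
      unfolding eq2 by (rule norm_sum[OF n]) simp
    also have "\<dots> \<le> (\<Sum>i\<in>UNIV. \<Sum>j\<in>UNIV. N (c i j *\<^sub>R (column i A - column j A)))"
      by (intro sum_mono norm_sum[OF n]) simp
    also have "\<dots> \<le> (\<Sum>i\<in>UNIV. \<Sum>j\<in>UNIV. c i j * diamA N A)"
      by (intro sum_mono) (simp add: norm_scale[OF n] c0 mult_left_mono diam_upper)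
    also have "\<dots> = (\<Sum>i\<in>UNIV. \<Sum>j\<in>UNIV. c i j) * diamA N A"
      by (simp add: sum_distrib_right)
    also have "(\<Sum>i\<in>UNIV. \<Sum>j\<in>UNIV. c i j) = t"
      using tpos by (simp add: c_def sum_divide_distrib[symmetric] sum_distrib_left[symmetric] tn[symmetric] t_def[symmetric])
    finally show ?thesis using l1 w_def by simp
  qed
qed



lemma closed_Zset: "closed (Zset (A::real^'n^'m) u)"
proof -
  have e: "Zset A u = std_simplex \<inter> {z. A *v z = u}" by (auto simp: Zset_def)
  have c: "closed {z::real^'n. A *v z = u}"
    by (intro closed_Collect_eq continuous_intros linear_continuous_on)
       (simp add: matrix_vector_mul_linear linear_conv_bounded_linear[symmetric])
  show ?thesis unfolding e by (rule closed_Int[OF closed_simplex c])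
qed

lemma compact_Zset: "compact (Zset (A::real^'n^'m) u)"
proof -
  have "Zset A u \<subseteq> std_simplex" by (auto simp: Zset_def)
  then have "bounded (Zset A u)" using bounded_simplex bounded_subset by blast
  then show ?thesis using closed_Zset by (simp add: compact_eq_bounded_closed)
qed

lemma cont_l1: "continuous_on S (\<lambda>z. l1norm (x - z))"
  unfolding l1norm_def by (intro continuous_intros)

lemma distZ_min:
  assumes u: "u \<in> convA (A::real^'n^'m)"
  shows "\<exists>z\<in>Zset A u. distZ A x u = l1norm (x - z) \<and> (\<forall>z'\<in>Zset A u. l1norm (x - z) \<le> l1norm (x - z'))"
proof -
  have ne: "Zset A u \<noteq> {}" using u by (auto simp: convA_def Zset_def)
  obtain z where z: "z \<in> Zset A u" "\<forall>z'\<in>Zset A u. l1norm (x - z) \<le> l1norm (x - z')"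
    using continuous_attains_inf[OF compact_Zset ne cont_l1] by blast
  have "distZ A x u = l1norm (x - z)"
    unfolding distZ_def by (rule cInf_eq_minimum) (use z in auto)
  then show ?thesis using z by blast
qed

lemma l1_nonneg: "l1norm w \<ge> 0" unfolding l1norm_def by (simp add: sum_nonneg)

lemma l1_pos: "w \<noteq> 0 \<Longrightarrow> l1norm w > 0"
proof -
  assume "w \<noteq> 0"
  then obtain k where "w $ k \<noteq> 0" by (auto simp: vec_eq_iff)
  then have "\<bar>w $ k\<bar> > 0" by simp
  moreover have "\<bar>w $ k\<bar> \<le> l1norm w" unfolding l1norm_def by (intro member_le_sum) auto
  ultimately show ?thesis by simp
qed

definition ext_set :: "(real^'m) set \<Rightarrow> real^'m \<Rightarrow> (real^'m) set" where
  "ext_set S P = {v \<in> S. \<exists>\<delta>>0. P + \<delta> *\<^sub>R (P - v) \<in> S}"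

lemma ext_shrink:
  fixes P :: "real^'m"
  assumes S: "convex S" and P: "P \<in> S" and q: "P + \<delta> *\<^sub>R (P - v) \<in> S" and d: "\<delta> > 0" "0 \<le> \<delta>'" "\<delta>' \<le> \<delta>"
  shows "P + \<delta>' *\<^sub>R (P - v) \<in> S"
proof -
  have "(1 - \<delta>'/\<delta>) *\<^sub>R P + (\<delta>'/\<delta>) *\<^sub>R (P + \<delta> *\<^sub>R (P - v)) \<in> S"
    using d by (intro convexD[OF S P q]) auto
  moreover have "(1 - \<delta>'/\<delta>) *\<^sub>R P + (\<delta>'/\<delta>) *\<^sub>R (P + \<delta> *\<^sub>R (P - v)) = P + \<delta>' *\<^sub>R (P - v)"
    using d(1) by (simp add: vec_eq_iff) (simp add: field_simps)
  ultimately show ?thesis by simp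
qed

lemma ext_convex:
  assumes S: "convex S" and P: "P \<in> S"
  shows "convex (ext_set S P)"
  unfolding convex_def
proof (intro ballI allI impI)
  fix v1 v2 and a b :: real
  assume v1: "v1 \<in> ext_set S P" and v2: "v2 \<in> ext_set S P" and ab: "0 \<le> a" "0 \<le> b" "a + b = 1"
  obtain d1 where d1: "d1 > 0" "P + d1 *\<^sub>R (P - v1) \<in> S" "v1 \<in> S" using v1 by (auto simp: ext_set_def)
  obtain d2 where d2: "d2 > 0" "P + d2 *\<^sub>R (P - v2) \<in> S" "v2 \<in> S" using v2 by (auto simp: ext_set_def)
  define d where "d = min d1 d2"
  have dd: "0 < d" "d \<le> d1" "d \<le> d2" using d1(1) d2(1) by (auto simp: d_def)
  have q1: "P + d *\<^sub>R (P - v1) \<in> S" using dd by (intro ext_shrink[OF S P d1(2) d1(1)]) auto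
  have q2: "P + d *\<^sub>R (P - v2) \<in> S" using dd by (intro ext_shrink[OF S P d2(2) d2(1)]) auto
  have m1: "a *\<^sub>R (P + d *\<^sub>R (P - v1)) + b *\<^sub>R (P + d *\<^sub>R (P - v2)) \<in> S"
    using ab by (intro convexD[OF S q1 q2]) auto
  have e1: "a *\<^sub>R (P + d *\<^sub>R (P - v1)) + b *\<^sub>R (P + d *\<^sub>R (P - v2)) = P + d *\<^sub>R (P - (a *\<^sub>R v1 + b *\<^sub>R v2))"
  proof -
    have b: "b = 1 - a" using ab by simp
    show ?thesis unfolding b by (simp add: vec_eq_iff) (simp add: field_simps)
  qed
  have m2: "a *\<^sub>R v1 + b *\<^sub>R v2 \<in> S" using ab by (intro convexD[OF S d1(3) d2(3)]) auto
  have m3: "P + d *\<^sub>R (P - (a *\<^sub>R v1 + b *\<^sub>R v2)) \<in> S" using m1 e1 by simp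
  show "a *\<^sub>R v1 + b *\<^sub>R v2 \<in> ext_set S P" unfolding ext_set_def mem_Collect_eq
    using m2 m3 dd(1) by blast
qed

lemma ext_face_aux:
  fixes P :: "real^'m"
  assumes S: "convex S" and P: "P \<in> S" and a: "a \<in> S" and b: "b \<in> S"
    and y: "y \<in> open_segment a b" and yG: "y \<in> ext_set S P"
  shows "a \<in> ext_set S P"
proof -
  obtain s where s: "0 < s" "s < 1" "y = (1 - s) *\<^sub>R a + s *\<^sub>R b" using y by (auto simp: in_segment)
  obtain \<delta> where d: "\<delta> > 0" "P + \<delta> *\<^sub>R (P - y) \<in> S" using yG by (auto simp: ext_set_def)
  define \<delta>' where "\<delta>' = (1 - s) * \<delta> / (1 + s * \<delta>)"
  have sd: "1 + s * \<delta> > 0" using s d by (simp add: add_pos_pos)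
  have d': "\<delta>' > 0" unfolding \<delta>'_def using s d sd by simp
  have m: "(1 / (1 + s * \<delta>)) *\<^sub>R (P + \<delta> *\<^sub>R (P - y)) + (s * \<delta> / (1 + s * \<delta>)) *\<^sub>R b \<in> S"
    using s d sd by (intro convexD[OF S d(2) b]) (auto simp: field_simps)
  have e: "(1 / (1 + s * \<delta>)) *\<^sub>R (P + \<delta> *\<^sub>R (P - y)) + (s * \<delta> / (1 + s * \<delta>)) *\<^sub>R b
      = P + \<delta>' *\<^sub>R (P - a)"
    unfolding s(3) \<delta>'_def using sd by (simp add: vec_eq_iff) (intro allI; simp add: divide_simps; algebra)
  have "P + \<delta>' *\<^sub>R (P - a) \<in> S" using m e by simp
  then show ?thesis unfolding ext_set_def mem_Collect_eq using a d' by blast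
qed

lemma ext_face:
  fixes P :: "real^'m"
  assumes S: "convex S" and P: "P \<in> S"
  shows "ext_set S P face_of S"
  unfolding face_of_def
proof (intro conjI ballI impI)
  show "ext_set S P \<subseteq> S" by (auto simp: ext_set_def)
  show "convex (ext_set S P)" by (rule ext_convex[OF S P])
  fix a b y assume "a \<in> S" "b \<in> S" "y \<in> ext_set S P" "y \<in> open_segment a b"
  then show "a \<in> ext_set S P" "b \<in> ext_set S P"
    using ext_face_aux[OF S P] open_segment_commute by metis+
qed

lemma P_ext: "convex S \<Longrightarrow> P \<in> S \<Longrightarrow> P \<in> ext_set S P"
  unfolding ext_set_def by (auto intro: exI[of _ 1])



lemma pp0: "pp w $ k \<ge> 0" and nn0: "nn w $ k \<ge> 0" by (auto simp: pp_def nn_def)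

lemma main_notin:
  fixes A :: "real^'n^'m"
  assumes z: "z \<in> Zset A u" and zmin: "\<forall>z'\<in>Zset A u. l1norm (x - z) \<le> l1norm (x - z')"
    and x: "x \<in> std_simplex"
    and t: "t = (\<Sum>k\<in>UNIV. pp (x - z) $ k)" "t = (\<Sum>k\<in>UNIV. nn (x - z) $ k)" "t > 0"
    and l1: "l1norm (x - z) = 2 * t"
    and P: "P = A *v ((1/t) *\<^sub>R nn (x - z))"
    and i: "pp (x - z) $ i > 0"
  shows "column i A \<notin> ext_set (convA A) P"
proof
  define w where "w = x - z"
  assume "column i A \<in> ext_set (convA A) P"
  then obtain \<delta> where d: "\<delta> > 0" "P + \<delta> *\<^sub>R (P - column i A) \<in> convA A"
    by (auto simp: ext_set_def)
  have zs: "z \<in> std_simplex" and Az: "A *v z = u" using z by (auto simp: Zset_def)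
  have cm: "(1/t) *\<^sub>R nn w \<in> std_simplex"
    using t unfolding std_simplex_def w_def by (auto simp: nn0 sum_divide_distrib[symmetric])
  have PA: "P \<in> convA A" using P mv_convA[OF cm] w_def by simp
  define \<delta>' where "\<delta>' = min \<delta> (pp w $ i / t)"
  have d': "\<delta>' > 0" "\<delta>' \<le> \<delta>" "\<delta>' \<le> pp w $ i / t" using d i t(3) by (auto simp: \<delta>'_def w_def)
  have "P + \<delta>' *\<^sub>R (P - column i A) \<in> convA A"
    using d' by (intro ext_shrink[OF convex_convA PA d(2) d(1)]) auto
  then obtain c where c: "c \<in> std_simplex" "P + \<delta>' *\<^sub>R (P - column i A) = A *v c"
    unfolding convA_def by auto
  define \<epsilon> where "\<epsilon> = \<delta>' / (1 + \<delta>')"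
  have eps: "0 < \<epsilon>" "\<epsilon> < 1" "\<epsilon> \<le> \<delta>'" using d' by (auto simp: \<epsilon>_def field_simps)
  have teps: "t * \<epsilon> \<le> pp w $ i"
  proof -
    have "t * \<epsilon> \<le> t * \<delta>'" using eps t(3) by simp
    also have "\<dots> \<le> t * (pp w $ i / t)" using d' t(3) by (intro mult_left_mono) auto
    finally show ?thesis using t(3) by simp
  qed
  define e :: "real^'n" where "e = axis i 1"
  have ek: "e $ k = (if k = i then 1 else 0)" for k by (simp add: e_def axis_def)
  define m where "m = z - nn w"
  have mk: "m $ k = min (x $ k) (z $ k)" for k by (simp add: m_def nn_def w_def)
  have mx: "x - m = pp w" by (simp add: vec_eq_iff mk pp_def w_def max_def min_def)
  have m0: "m $ k \<ge> 0" for k using x zs by (auto simp: mk std_simplex_def)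
  have summ: "(\<Sum>k\<in>UNIV. m $ k) = 1 - t"
    using zs t(2) by (simp add: m_def sum_subtractf std_simplex_def w_def)
  define z' where "z' = m + (t * \<epsilon>) *\<^sub>R e + (t * (1 - \<epsilon>)) *\<^sub>R c"
  have c0: "c $ k \<ge> 0" for k using c by (simp add: std_simplex_def)
  have sumc: "(\<Sum>k\<in>UNIV. c $ k) = 1" using c by (simp add: std_simplex_def)
  have sume: "(\<Sum>k\<in>UNIV. e $ k) = 1" by (simp add: ek)
  have z's: "z' \<in> std_simplex"
    unfolding std_simplex_def mem_Collect_eq
  proof
    show "\<forall>k. 0 \<le> z' $ k" using m0 c0 eps t(3) by (auto simp: z'_def ek)
    have "(\<Sum>k\<in>UNIV. z' $ k) = (\<Sum>k\<in>UNIV. m $ k) + (t * \<epsilon>) * (\<Sum>k\<in>UNIV. e $ k) + (t * (1 - \<epsilon>)) * (\<Sum>k\<in>UNIV. c $ k)"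
      by (simp add: z'_def sum.distrib sum_distrib_left)
    also have "\<dots> = 1" by (simp add: summ sume sumc algebra_simps)
    finally show "(\<Sum>k\<in>UNIV. z' $ k) = 1" .
  qed
  have nnP: "A *v nn w = t *\<^sub>R P"
  proof -
    have "nn w = t *\<^sub>R ((1/t) *\<^sub>R nn w)" using t(3) by simp
    then show ?thesis using P w_def by (metis matrix_vector_mult_scaleR)
  qed
  have comb: "(t * \<epsilon>) *\<^sub>R column i A + (t * (1 - \<epsilon>)) *\<^sub>R (P + \<delta>' *\<^sub>R (P - column i A)) = t *\<^sub>R P"
    unfolding \<epsilon>_def using d'(1) by (simp add: vec_eq_iff) (intro allI; simp add: divide_simps; algebra)
  have Az': "A *v z' = u"
  proof -
    have "A *v z' = A *v m + (t * \<epsilon>) *\<^sub>R column i A + (t * (1 - \<epsilon>)) *\<^sub>R (A *v c)"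
      by (simp add: z'_def matrix_vector_right_distrib matrix_vector_mult_scaleR e_def matrix_vector_mult_basis)
    also have "\<dots> = A *v m + A *v nn w" using comb c(2) nnP by (simp add: add.assoc)
    also have "\<dots> = A *v z" by (simp add: m_def matrix_vector_right_distrib[symmetric])
    finally show ?thesis using Az by simp
  qed
  have "z' \<in> Zset A u" using z's Az' by (simp add: Zset_def)
  then have le: "l1norm (x - z) \<le> l1norm (x - z')" using zmin by blast
  have "l1norm (x - z') = (\<Sum>k\<in>UNIV. \<bar>(pp w $ k - t * \<epsilon> * e $ k) - t * (1 - \<epsilon>) * c $ k\<bar>)"
    unfolding l1norm_def
  proof (intro sum.cong refl)
    fix k
    have "x - z' = (x - m) - (t * \<epsilon>) *\<^sub>R e - (t * (1 - \<epsilon>)) *\<^sub>R c" by (simp add: z'_def algebra_simps)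
    then have "(x - z') $ k = pp w $ k - t * \<epsilon> * e $ k - t * (1 - \<epsilon>) * c $ k" by (simp add: mx)
    then show "\<bar>(x - z') $ k\<bar> = \<bar>(pp w $ k - t * \<epsilon> * e $ k) - t * (1 - \<epsilon>) * c $ k\<bar>" by simp
  qed
  also have "\<dots> \<le> (\<Sum>k\<in>UNIV. (pp w $ k - t * \<epsilon> * e $ k) + t * (1 - \<epsilon>) * c $ k)"
  proof (intro sum_mono)
    fix k
    have a: "pp w $ k - t * \<epsilon> * e $ k \<ge> 0" using teps pp0[of w k] by (auto simp: ek)
    have b: "t * (1 - \<epsilon>) * c $ k \<ge> 0" using t(3) eps c0[of k] by simp
    show "\<bar>(pp w $ k - t * \<epsilon> * e $ k) - t * (1 - \<epsilon>) * c $ k\<bar> \<le> (pp w $ k - t * \<epsilon> * e $ k) + t * (1 - \<epsilon>) * c $ k"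
      using a b by linarith
  qed
  also have "\<dots> = (\<Sum>k\<in>UNIV. pp w $ k) - t * \<epsilon> * (\<Sum>k\<in>UNIV. e $ k) + t * (1 - \<epsilon>) * (\<Sum>k\<in>UNIV. c $ k)"
    by (simp add: sum.distrib sum_subtractf sum_distrib_left)
  also have "\<dots> = 2 * t - 2 * t * \<epsilon>" using t(1) by (simp add: sume sumc w_def algebra_simps)
  also have "\<dots> < 2 * t" using t(3) eps by simp
  finally show False using le l1 by simp
qed


lemma setdist_le:
  assumes n: "is_norm N" and "a \<in> F" "b \<in> H"
  shows "setdistN N F H \<le> N (a - b)"
  unfolding setdistN_def
proof (rule cInf_lower)
  show "N (a - b) \<in> {N (u - w) |u w. u \<in> F \<and> w \<in> H}" using assms by blast
  show "bdd_below {N (u - w) |u w. u \<in> F \<and> w \<in> H}"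
    unfolding bdd_below_def using norm_nonneg'[OF n] by blast
qed

lemma key:
  fixes A :: "real^'n^'m"
  assumes n: "is_norm N" and u: "u \<in> convA A" and x: "x \<in> std_simplex" and xz: "x \<notin> Zset A u"
  shows "\<exists>F. F face_of convA A \<and> F \<noteq> {} \<and> F \<noteq> convA A \<and> distZ A x u > 0 \<and>
     distZ A x u / 2 * setdistN N F (convex hull {column j A | j. column j A \<notin> F}) \<le> N (A *v x - u)"
proof -
  obtain z where z: "z \<in> Zset A u" and dz: "distZ A x u = l1norm (x - z)"
    and zmin: "\<forall>z'\<in>Zset A u. l1norm (x - z) \<le> l1norm (x - z')"
    using distZ_min[OF u] by blast
  have zs: "z \<in> std_simplex" and Az: "A *v z = u" using z by (auto simp: Zset_def)
  define w where "w = x - z"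
  define t where "t = (\<Sum>k\<in>UNIV. pp w $ k)"
  have tn: "t = (\<Sum>k\<in>UNIV. nn w $ k)" unfolding t_def w_def
    by (rule sum_pp_nn[OF simplex_diff_sum[OF x zs]])
  have l1: "l1norm w = 2 * t" using l1_pp_nn[of w] tn t_def by simp
  have "x \<noteq> z" using xz z by auto
  then have "l1norm w > 0" using l1_pos[of w] by (simp add: w_def)
  then have tpos: "t > 0" using l1 by simp
  define cm where "cm = (1/t) *\<^sub>R nn w"
  define cp where "cp = (1/t) *\<^sub>R pp w"
  have cm: "cm \<in> std_simplex"
    using tn tpos unfolding std_simplex_def cm_def by (auto simp: nn0 sum_divide_distrib[symmetric])
  have cp: "cp \<in> std_simplex"
    using t_def tpos unfolding std_simplex_def cp_def by (auto simp: pp0 sum_divide_distrib[symmetric])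
  define P where "P = A *v cm"
  define Q where "Q = A *v cp"
  have PA: "P \<in> convA A" using mv_convA[OF cm] P_def by simp
  have QA: "Q \<in> convA A" using mv_convA[OF cp] Q_def by simp
  have ppe: "pp w = t *\<^sub>R cp" and nne: "nn w = t *\<^sub>R cm" using tpos by (auto simp: cp_def cm_def)
  have AxU: "A *v x - u = t *\<^sub>R (Q - P)"
  proof -
    have "A *v x - u = A *v w" using Az by (simp add: w_def matrix_vector_mult_diff_distrib)
    also have "\<dots> = A *v (pp w) - A *v (nn w)" by (metis pp_nn matrix_vector_mult_diff_distrib)
    also have "\<dots> = t *\<^sub>R (Q - P)"
      by (simp add: ppe nne matrix_vector_mult_scaleR P_def Q_def scaleR_diff_right)
    finally show ?thesis .
  qed
  define G where "G = ext_set (convA A) P"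
  have Gf: "G face_of convA A" unfolding G_def by (rule ext_face[OF convex_convA PA])
  have PG: "P \<in> G" unfolding G_def by (rule P_ext[OF convex_convA PA])
  have notin: "column i A \<notin> G" if "pp w $ i > 0" for i
    unfolding G_def
    by (rule main_notin[OF z zmin x _ _ tpos _ _ that[unfolded w_def]])
       (use tn t_def l1 in \<open>auto simp: w_def P_def cm_def\<close>)
  define I where "I = {k. pp w $ k > 0}"
  have outI: "k \<notin> I \<Longrightarrow> cp $ k = 0" for k using pp0[of w k] by (auto simp: I_def cp_def)
  define H where "H = convex hull {column j A | j. column j A \<notin> G}"
  have QH: "Q \<in> H"
  proof -
    have "Q = (\<Sum>k\<in>UNIV. (cp $ k) *\<^sub>R column k A)" by (simp add: Q_def mv_sum)
    also have "\<dots> = (\<Sum>k\<in>I. (cp $ k) *\<^sub>R column k A)"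
      by (rule sum.mono_neutral_right) (auto simp: outI)
    finally have Qe: "Q = (\<Sum>k\<in>I. (cp $ k) *\<^sub>R column k A)" .
    have "(\<Sum>k\<in>I. cp $ k) = (\<Sum>k\<in>UNIV. cp $ k)"
      by (rule sum.mono_neutral_left) (auto simp: outI)
    also have "\<dots> = 1" using cp by (simp add: std_simplex_def)
    finally have s1: "(\<Sum>k\<in>I. cp $ k) = 1" .
    have "(\<Sum>k\<in>I. (cp $ k) *\<^sub>R column k A) \<in> H"
      unfolding H_def
    proof (rule convex_sum)
      show "finite I" by simp
      show "convex (convex hull {column j A |j. column j A \<notin> G})" by simp
      show "(\<Sum>k\<in>I. cp $ k) = 1" by (rule s1)
      show "\<And>i. i \<in> I \<Longrightarrow> 0 \<le> cp $ i" using cp by (simp add: std_simplex_def)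
      fix i assume "i \<in> I"
      then have "column i A \<notin> G" using notin by (simp add: I_def)
      then show "column i A \<in> convex hull {column j A |j. column j A \<notin> G}"
        by (intro hull_inc) blast
    qed
    then show ?thesis using Qe by simp
  qed
  obtain i where i: "pp w $ i > 0"
  proof -
    have "\<not> (\<forall>k. pp w $ k \<le> 0)"
    proof
      assume "\<forall>k. pp w $ k \<le> 0"
      then have "t \<le> 0" unfolding t_def by (simp add: sum_nonpos)
      then show False using tpos by simp
    qed
    then show ?thesis using that by (auto simp: not_le)
  qed
  have Gne: "G \<noteq> convA A" using notin[OF i] column_convA[of i A] by blast
  have sd: "setdistN N G H \<le> N (P - Q)" by (rule setdist_le[OF n PG QH])
  have "N (A *v x - u) = t * N (P - Q)"
    using AxU tpos norm_scale[OF n] norm_commute[OF n, of Q P] by simp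
  moreover have "distZ A x u / 2 = t" using dz l1 w_def by simp
  ultimately have "distZ A x u / 2 * setdistN N G H \<le> N (A *v x - u)"
    using sd tpos by simp
  moreover have "distZ A x u > 0" using dz l1 w_def tpos by simp
  ultimately show ?thesis using Gf Gne PG unfolding H_def by blast
qed



lemma face_hull_disj:
  fixes S :: "'a::real_vector set"
  assumes F: "F face_of S" and S: "convex S" and fin: "finite K"
  shows "K \<subseteq> S \<Longrightarrow> K \<inter> F = {} \<Longrightarrow> convex hull K \<inter> F = {}"
  using fin
proof (induction K rule: finite_induct)
  case empty then show ?case by simp
next
  case (insert a K)
  have aS: "a \<in> S" and KS: "K \<subseteq> S" and aF: "a \<notin> F" and KF: "K \<inter> F = {}" using insert.prems by auto
  have IH: "convex hull K \<inter> F = {}" using insert.IH KS KF by blast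
  have hK: "convex hull K \<subseteq> S" using KS S by (simp add: hull_minimal)
  show ?case
  proof (cases "K = {}")
    case True then show ?thesis using aF by simp
  next
    case False
    show ?thesis
    proof (rule ccontr)
      assume "convex hull insert a K \<inter> F \<noteq> {}"
      then obtain y where yh: "y \<in> convex hull insert a K" and yF: "y \<in> F" by blast
      obtain u v b where uv: "0 \<le> u" "0 \<le> v" "u + v = 1" and b: "b \<in> convex hull K" and y: "y = u *\<^sub>R a + v *\<^sub>R b"
        using yh convex_hull_insert[OF False] by blast
      have bS: "b \<in> S" using b hK by blast
      show False
      proof (cases "u = 0")
        case True then have "y = b" using uv y by simp
        then show False using b yF IH by blast
      next
        case u0: False
        show False
        proof (cases "v = 0")
          case True then have "y = a" using uv y by simp
          then show False using aF yF by simp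
        next
          case v0: False
          show False
          proof (cases "a = b")
            case True then have "y = a" using uv y by (simp add: scaleR_add_left[symmetric])
            then show False using aF yF by simp
          next
            case False
            have "y \<in> open_segment a b"
              unfolding in_segment using False uv u0 v0
              by (intro conjI exI[of _ v]) (auto simp: y)
            then have "a \<in> F" using face_ofD[OF F _ aS bS yF] by blast
            then show False using aF by simp
          qed
        qed
      qed
    qed
  qed
qed

lemma cols_not_in:
  assumes F: "F face_of convA A" and Fne: "F \<noteq> convA A"
  shows "{column j A | j. column j A \<notin> F} \<noteq> {}"
proof
  assume "{column j A | j. column j A \<notin> F} = {}"
  then have "range (\<lambda>i. column i A) \<subseteq> F" by auto
  then have "convA A \<subseteq> F" unfolding convA_hull using face_of_imp_convex[OF F] by (simp add: hull_minimal)
  then show False using Fne face_of_imp_subset[OF F] by blast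
qed

lemma setdist_pos:
  fixes A :: "real^'n^'m"
  assumes n: "is_norm N" and F: "F face_of convA A" and Fe: "F \<noteq> {}" and Fne: "F \<noteq> convA A"
  shows "setdistN N F (convex hull {column j A | j. column j A \<notin> F}) > 0"
proof -
  define K where "K = {column j A | j. column j A \<notin> F}"
  define H where "H = convex hull K"
  have finK: "finite K" unfolding K_def
    by (rule finite_subset[of _ "range (\<lambda>i. column i A)"]) auto
  have KS: "K \<subseteq> convA A" unfolding K_def using column_convA by blast
  have KF: "K \<inter> F = {}" unfolding K_def by blast
  have disj: "H \<inter> F = {}" unfolding H_def
    by (rule face_hull_disj[OF F convex_convA finK KS KF])
  have Hne: "H \<noteq> {}" unfolding H_def K_def using cols_not_in[OF F Fne] by simp
  have cF: "compact F" by (rule face_of_imp_compact[OF convex_convA compact_convA F])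
  have cH: "compact H" unfolding H_def using finK by (simp add: compact_convex_hull finite_imp_compact)
  have cont: "continuous_on (F \<times> H) (\<lambda>p. N (fst p - snd p))"
    by (rule continuous_on_compose2[OF norm_cont[OF n, of UNIV]]) (auto intro!: continuous_intros)
  obtain p where p: "p \<in> F \<times> H" and pmin: "\<forall>q\<in>F \<times> H. N (fst p - snd p) \<le> N (fst q - snd q)"
    using continuous_attains_inf[OF compact_Times[OF cF cH] _ cont] Fe Hne by blast
  have "setdistN N F H = N (fst p - snd p)"
    unfolding setdistN_def
  proof (rule cInf_eq_minimum)
    show "N (fst p - snd p) \<in> {N (u - w) |u w. u \<in> F \<and> w \<in> H}" using p by (auto simp: mem_Times_iff)
    fix y assume "y \<in> {N (u - w) |u w. u \<in> F \<and> w \<in> H}"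
    then obtain a b where "a \<in> F" "b \<in> H" "y = N (a - b)" by blast
    then show "N (fst p - snd p) \<le> y" using pmin by force
  qed
  moreover have "fst p \<noteq> snd p" using p disj by auto
  ultimately show ?thesis using norm_pos[OF n] unfolding H_def K_def by simp
qed

lemma facial_props:
  fixes A :: "real^'n^'m"
  assumes n: "is_norm N" and F: "F face_of convA A" and Fe: "F \<noteq> {}" and Fne: "F \<noteq> convA A"
  shows "facial_dist N A > 0"
    and "facial_dist N A \<le> setdistN N F (convex hull {column j A | j. column j A \<notin> F})"
proof -
  define Fs where "Fs = {F. F face_of convA A \<and> F \<noteq> {} \<and> F \<noteq> convA A}"
  define g where "g F = setdistN N F (convex hull {column j A | j. column j A \<notin> F})" for F
  have eq: "{setdistN N F (convex hull {column j A | j. column j A \<notin> F}) | F.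
       F face_of convA A \<and> F \<noteq> {} \<and> F \<noteq> convA A} = g ` Fs"
    by (auto simp: g_def Fs_def)
  have fin: "finite (g ` Fs)"
    by (rule finite_imageI, rule finite_subset[OF _ finite_polytope_faces[OF polytope_convA]])
       (auto simp: Fs_def)
  have ne: "g ` Fs \<noteq> {}" using F Fe Fne by (auto simp: Fs_def)
  have fd: "facial_dist N A = Min (g ` Fs)"
    unfolding facial_dist_def eq by (rule cInf_eq_Min[OF fin ne])
  have "\<forall>y\<in>g ` Fs. y > 0" using setdist_pos[OF n] by (auto simp: Fs_def g_def)
  then show "facial_dist N A > 0" unfolding fd using fin ne by simp
  have "g F \<in> g ` Fs" using F Fe Fne by (auto simp: Fs_def)
  then show "facial_dist N A \<le> setdistN N F (convex hull {column j A | j. column j A \<notin> F})"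
    unfolding fd using fin by (simp add: g_def)
qed



lemma quot_bounds:
  fixes A :: "real^'n^'m"
  assumes n: "is_norm N"
    and sm: "smooth_on N Lf f f' (convA A)"
    and sc: "strongly_convex_wrt N \<mu>f f f' (convA A)"
    and p: "p \<in> rel_pairs A"
  shows "rel_quot f f' A p \<le> ereal (Lf * (diamA N A)\<^sup>2 / 4)"
    and "rel_quot f f' A p \<ge> ereal (\<mu>f * (facial_dist N A)\<^sup>2 / 4)"
    and "\<exists>F. F face_of convA A \<and> F \<noteq> {} \<and> F \<noteq> convA A"
proof -
  obtain u x where p': "p = (u, x)" and u: "u \<in> convA A" and x: "x \<in> std_simplex" and xz: "x \<notin> Zset A u"
    using p by (auto simp: rel_pairs_def)
  obtain F where F: "F face_of convA A" "F \<noteq> {}" "F \<noteq> convA A" and dpos: "distZ A x u > 0"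
    and kl: "distZ A x u / 2 * setdistN N F (convex hull {column j A | j. column j A \<notin> F}) \<le> N (A *v x - u)"
    using key[OF n u x xz] by blast
  then show "\<exists>F. F face_of convA A \<and> F \<noteq> {} \<and> F \<noteq> convA A" by blast
  obtain z where z: "z \<in> Zset A u" and dz: "distZ A x u = l1norm (x - z)"
    using distZ_min[OF u] by blast
  have zs: "z \<in> std_simplex" and Az: "A *v z = u" using z by (auto simp: Zset_def)
  define d where "d = distZ A x u"
  define b where "b = breg f f' u (A *v x)"
  define Nv where "Nv = N (A *v x - u)"
  have Nv0: "Nv \<ge> 0" unfolding Nv_def by (rule norm_nonneg'[OF n])
  have up: "Nv \<le> d / 2 * diamA N A" unfolding Nv_def d_def dz using upper_main[OF n x zs, of A] Az by simp
  have AxA: "A *v x \<in> convA A" by (rule mv_convA[OF x])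
  have Lf: "Lf > 0" and b_up: "2 * b \<le> Lf * Nv\<^sup>2"
    using sm u AxA unfolding smooth_on_def b_def breg_def Nv_def by (auto, fastforce)
  have mu0: "\<mu>f \<ge> 0" and b_lo: "2 * b \<ge> \<mu>f * Nv\<^sup>2"
    using sc u AxA unfolding strongly_convex_wrt_def b_def breg_def Nv_def by (auto, fastforce)
  have dp: "d > 0" using dpos d_def by simp
  have q: "rel_quot f f' A p = ereal (2 * b / d\<^sup>2)" by (simp add: rel_quot_def p' b_def d_def)
  have "2 * b \<le> Lf * (d / 2 * diamA N A)\<^sup>2"
    using b_up Lf Nv0 up by (meson less_imp_le mult_left_mono order_trans power_mono)
  then have "2 * b / d\<^sup>2 \<le> Lf * (d / 2 * diamA N A)\<^sup>2 / d\<^sup>2"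
    using dp by (simp add: divide_right_mono)
  also have "\<dots> = Lf * (diamA N A)\<^sup>2 / 4" using dp by (simp add: field_simps power2_eq_square)
  finally show "rel_quot f f' A p \<le> ereal (Lf * (diamA N A)\<^sup>2 / 4)" using q by simp
  have fd: "facial_dist N A > 0" "facial_dist N A \<le> setdistN N F (convex hull {column j A | j. column j A \<notin> F})"
    using facial_props[OF n F] by auto
  have "d / 2 * facial_dist N A \<le> Nv"
    using kl fd dp unfolding Nv_def d_def by (meson less_imp_le mult_left_mono order_trans half_gt_zero)
  then have "\<mu>f * (d / 2 * facial_dist N A)\<^sup>2 \<le> 2 * b"
    using b_lo mu0 fd dp by (meson less_imp_le mult_left_mono order_trans power_mono mult_nonneg_nonneg half_gt_zero)
  then have "\<mu>f * (d / 2 * facial_dist N A)\<^sup>2 / d\<^sup>2 \<le> 2 * b / d\<^sup>2"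
    using dp by (simp add: divide_right_mono)
  moreover have "\<mu>f * (d / 2 * facial_dist N A)\<^sup>2 / d\<^sup>2 = \<mu>f * (facial_dist N A)\<^sup>2 / 4"
    using dp by (simp add: field_simps power2_eq_square)
  ultimately have "\<mu>f * (facial_dist N A)\<^sup>2 / 4 \<le> 2 * b / d\<^sup>2" by linarith
  then show "rel_quot f f' A p \<ge> ereal (\<mu>f * (facial_dist N A)\<^sup>2 / 4)" using q by simp
qed


theorem corollary2:
  fixes A :: "real^'n^'m"
    and N :: "real^'m \<Rightarrow> real"
    and f :: "real^'m \<Rightarrow> real"
    and f' :: "real^'m \<Rightarrow> real^'m \<Rightarrow> real"
    and D :: "(real^'m) set"
    and Lf \<mu>f :: real
  assumes "is_norm N"
    and "\<exists>i j. column i A \<noteq> column j A"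
    and "open D" and "convex D" and "convA A \<subseteq> D"
    and "convex_on D f"
    and "\<forall>u\<in>D. (f has_derivative f' u) (at u)"
    and "smooth_on N Lf f f' (convA A)"
    and "strongly_convex_wrt N \<mu>f f f' (convA A)"
  shows "L_rel f f' A \<le> ereal (Lf * (diamA N A)\<^sup>2 / 4)
    \<and> mu_rel f f' A \<ge> ereal (\<mu>f * (facial_dist N A)\<^sup>2 / 4)
    \<and> (\<mu>f > 0 \<longrightarrow> real_of_ereal (L_rel f f' A) / real_of_ereal (mu_rel f f' A)
            \<le> Lf / \<mu>f * ((diamA N A)\<^sup>2 / (facial_dist N A)\<^sup>2))"
proof -
  note n = assms(1) and sm = assms(8) and sc = assms(9)
  have Lup: "L_rel f f' A \<le> ereal (Lf * (diamA N A)\<^sup>2 / 4)"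
    unfolding L_rel_def by (rule SUP_least) (rule quot_bounds(1)[OF n sm sc])
  have Mlo: "mu_rel f f' A \<ge> ereal (\<mu>f * (facial_dist N A)\<^sup>2 / 4)"
    unfolding mu_rel_def by (rule INF_greatest) (rule quot_bounds(2)[OF n sm sc])
  obtain i j where ij: "column i A \<noteq> column j A" using assms(2) by blast
  have p0: "(column i A, axis j 1) \<in> rel_pairs A"
    unfolding rel_pairs_def Zset_def using column_convA[of i A] axis_simplex[of j] ij
    by (simp add: matrix_vector_mult_basis)
  then have ne: "rel_pairs A \<noteq> {}" by blast
  have MuL: "mu_rel f f' A \<le> L_rel f f' A"
    unfolding mu_rel_def L_rel_def by (rule INF_le_SUP[OF ne])
  obtain F where F: "F face_of convA A" "F \<noteq> {}" "F \<noteq> convA A"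
    using quot_bounds(3)[OF n sm sc p0] by blast
  have Phi: "facial_dist N A > 0" using facial_props(1)[OF n F] .
  have Lf: "Lf > 0" using sm by (simp add: smooth_on_def)
  have part3: "real_of_ereal (L_rel f f' A) / real_of_ereal (mu_rel f f' A)
            \<le> Lf / \<mu>f * ((diamA N A)\<^sup>2 / (facial_dist N A)\<^sup>2)" if mu: "\<mu>f > 0"
  proof -
    define lo where "lo = \<mu>f * (facial_dist N A)\<^sup>2 / 4"
    define hi where "hi = Lf * (diamA N A)\<^sup>2 / 4"
    have lo0: "lo > 0" unfolding lo_def using mu Phi by simp
    have hi0: "hi \<ge> 0" unfolding hi_def using Lf by simp
    obtain l where l: "L_rel f f' A = ereal l"
      using Lup Mlo MuL by (cases "L_rel f f' A") (auto simp: hi_def lo_def)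
    obtain m where m: "mu_rel f f' A = ereal m"
      using Lup Mlo MuL by (cases "mu_rel f f' A") (auto simp: hi_def lo_def)
    have lm: "l \<le> hi" "lo \<le> m" using Lup Mlo l m by (auto simp: hi_def lo_def)
    have "l / m \<le> hi / lo" by (rule frac_le[OF hi0 lm(1) lo0 lm(2)])
    also have "hi / lo = Lf / \<mu>f * ((diamA N A)\<^sup>2 / (facial_dist N A)\<^sup>2)"
      unfolding hi_def lo_def using mu Phi by (simp add: field_simps)
    finally show ?thesis using l m by simp
  qed
  show ?thesis using Lup Mlo part3 by blast
qed

end
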